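(* Let $\sigma$ be the substitution on $\{0,1\}$ given by $\sigma(0)=01$, $\sigma(1)=00$, let $X_\sigma\subset\{0,1\}^{\mathbb Z}$ be its subshift with shift map $S$, and let $T:X_\sigma\times\mathbb Z_3\to X_\sigma\times\mathbb Z_3$ be $T(x,z)=(Sx,z+1)$. Then the system $(X_\sigma\times\mathbb Z_3,T)$ is neither expansive nor equicontinuous.
   Context: $X_\sigma$ is the set of bi-infinite sequences over $\{0,1\}$ all of whose finite subwords are subwords of $\sigma^k(a)$ for some $a\in\{0,1\}$, $k\ge1$ (with $\sigma$ extended to words by concatenation); $S(x)_i=x_{i+1}$. $\mathbb Z_3$ is the ring of $3$-adic integers. $T$ is expansive if there is $\delta>0$ such that distinct points are separated by more than $\delta$ along some iterate; equicontinuous if the family $\{T^n\}_{n\in\mathbb Z}$ is equicontinuous. *)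

theory Defs
  imports Complex_Main "HOL-Library.Sublist"
begin

definition sigma :: "nat \<Rightarrow> nat list" where
  "sigma a = (if a = 0 then [0, 1] else [0, 0])"

definition sigma_word :: "nat list \<Rightarrow> nat list" where
  "sigma_word w = concat (map sigma w)"

definition lang_sigma :: "nat list set" where
  "lang_sigma = {w. \<exists>a\<in>{0,1}. \<exists>k\<ge>1. sublist w ((sigma_word ^^ k) [a])}"

definition subword :: "(int \<Rightarrow> nat) \<Rightarrow> int \<Rightarrow> nat \<Rightarrow> nat list" where
  "subword x i n = map (\<lambda>j. x (i + int j)) [0..<n]"

definition X_sigma :: "(int \<Rightarrow> nat) set" where
  "X_sigma = {x. (\<forall>i. x i \<in> {0,1}) \<and> (\<forall>i n. subword x i n \<in> lang_sigma)}"

definition shift :: "(int \<Rightarrow> nat) \<Rightarrow> (int \<Rightarrow> nat)" where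
  "shift x = (\<lambda>i. x (i + 1))"

definition shift_inv :: "(int \<Rightarrow> nat) \<Rightarrow> (int \<Rightarrow> nat)" where
  "shift_inv x = (\<lambda>i. x (i - 1))"

definition dist_seq :: "(int \<Rightarrow> nat) \<Rightarrow> (int \<Rightarrow> nat) \<Rightarrow> real" where
  "dist_seq x y = (if x = y then 0 else
     (1/2) ^ (LEAST n::nat. x (int n) \<noteq> y (int n) \<or> x (- int n) \<noteq> y (- int n)))"

section \<open>3-adic integers as the inverse limit of Z/3^n Z\<close>

definition Z3 :: "(nat \<Rightarrow> int) set" where
  "Z3 = {z. \<forall>n. z n \<in> {0..<3 ^ n} \<and> z n = z (Suc n) mod 3 ^ n}"

definition z3_plus1 :: "(nat \<Rightarrow> int) \<Rightarrow> (nat \<Rightarrow> int)" where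
  "z3_plus1 z = (\<lambda>n. (z n + 1) mod 3 ^ n)"

definition z3_minus1 :: "(nat \<Rightarrow> int) \<Rightarrow> (nat \<Rightarrow> int)" where
  "z3_minus1 z = (\<lambda>n. (z n - 1) mod 3 ^ n)"

text \<open>3-adic metric: |z - w|_3 = 3^(-v) where v is the largest n with z = w mod 3^n.\<close>
definition dist_Z3 :: "(nat \<Rightarrow> int) \<Rightarrow> (nat \<Rightarrow> int) \<Rightarrow> real" where
  "dist_Z3 z w = (if z = w then 0 else (1/3) ^ ((LEAST n. z n \<noteq> w n) - 1))"

definition Xprod :: "((int \<Rightarrow> nat) \<times> (nat \<Rightarrow> int)) set" where
  "Xprod = X_sigma \<times> Z3"

definition dist_prod :: "((int \<Rightarrow> nat) \<times> (nat \<Rightarrow> int)) \<Rightarrow> ((int \<Rightarrow> nat) \<times> (nat \<Rightarrow> int)) \<Rightarrow> real" where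
  "dist_prod p q = max (dist_seq (fst p) (fst q)) (dist_Z3 (snd p) (snd q))"

definition Tmap :: "((int \<Rightarrow> nat) \<times> (nat \<Rightarrow> int)) \<Rightarrow> ((int \<Rightarrow> nat) \<times> (nat \<Rightarrow> int))" where
  "Tmap p = (shift (fst p), z3_plus1 (snd p))"

definition Tinv :: "((int \<Rightarrow> nat) \<times> (nat \<Rightarrow> int)) \<Rightarrow> ((int \<Rightarrow> nat) \<times> (nat \<Rightarrow> int))" where
  "Tinv p = (shift_inv (fst p), z3_minus1 (snd p))"

definition Tpow :: "int \<Rightarrow> ((int \<Rightarrow> nat) \<times> (nat \<Rightarrow> int)) \<Rightarrow> ((int \<Rightarrow> nat) \<times> (nat \<Rightarrow> int))" where
  "Tpow n = (if n \<ge> 0 then Tmap ^^ nat n else Tinv ^^ nat (- n))"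

definition expansive :: "'a set \<Rightarrow> ('a \<Rightarrow> 'a \<Rightarrow> real) \<Rightarrow> (int \<Rightarrow> 'a \<Rightarrow> 'a) \<Rightarrow> bool" where
  "expansive X d f \<longleftrightarrow> (\<exists>\<delta>>0. \<forall>p\<in>X. \<forall>q\<in>X. p \<noteq> q \<longrightarrow> (\<exists>n. d (f n p) (f n q) > \<delta>))"

definition equicontinuous :: "'a set \<Rightarrow> ('a \<Rightarrow> 'a \<Rightarrow> real) \<Rightarrow> (int \<Rightarrow> 'a \<Rightarrow> 'a) \<Rightarrow> bool" where
  "equicontinuous X d f \<longleftrightarrow> (\<forall>p\<in>X. \<forall>\<epsilon>>0. \<exists>\<delta>>0. \<forall>q\<in>X. d p q < \<delta> \<longrightarrow> (\<forall>n. d (f n p) (f n q) < \<epsilon>))"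

end

theory Submission
  imports Defs
begin

function w :: "int \<Rightarrow> nat" where
  "w i = (if i = 0 then 0 else if odd i then 0 else 1 - w (i div 2))"
  by pat_completeness auto
termination
  by (relation "measure (\<lambda>i. nat \<bar>i\<bar>)") auto

declare w.simps[simp del]

lemma w_odd: "odd i \<Longrightarrow> w i = 0"
  by (subst w.simps) auto

lemma w_double: "m \<noteq> 0 \<Longrightarrow> w (2 * m) = 1 - w m"
  by (subst w.simps) auto

lemma w_01: "w i \<in> {0,1}"
proof (induction i rule: w.induct)
  case (1 i)
  then show ?case by (subst w.simps) auto
qed

lemma w_le1: "w i \<le> 1" using w_01[of i] by auto

lemma w_trans: "i \<noteq> 0 \<Longrightarrow> \<bar>i\<bar> < 2 ^ K \<Longrightarrow> w (i + 2 ^ K) = w i"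
proof (induction K arbitrary: i)
  case 0
  then show ?case by auto
next
  case (Suc K)
  show ?case
  proof (cases "odd i")
    case True
    then have "odd (i + 2 ^ Suc K)" by simp
    then show ?thesis using True by (simp add: w_odd)
  next
    case False
    then obtain j where j: "i = 2 * j" by (auto elim: evenE)
    have j0: "j \<noteq> 0" using Suc.prems j by auto
    have jb: "\<bar>j\<bar> < 2 ^ K" using Suc.prems j by auto
    have e: "i + 2 ^ Suc K = 2 * (j + 2 ^ K)" using j by simp
    have ne: "j + 2 ^ K \<noteq> 0" using jb by auto
    have "w (i + 2 ^ Suc K) = 1 - w (j + 2 ^ K)" unfolding e using ne by (rule w_double)
    also have "\<dots> = 1 - w j" using Suc.IH[OF j0 jb] by simp
    also have "\<dots> = w i" using j j0 w_double by simp
    finally show ?thesis .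
  qed
qed

lemma w_pow: "w (2 ^ K) = K mod 2"
proof (induction K)
  case 0
  then show ?case by (simp add: w_odd)
next
  case (Suc K)
  have "w (2 ^ Suc K) = 1 - w (2 ^ K)" using w_double[of "2 ^ K"] by simp
  then show ?case using Suc by (auto simp: mod_Suc)
qed

lemma w_neg: "w (- i) = w i"
proof (induction i rule: w.induct)
  case (1 i)
  show ?case
  proof (cases "i = 0 \<or> odd i")
    case True
    then show ?thesis by (auto simp: w_odd)
  next
    case False
    then obtain j where j: "i = 2 * j" "j \<noteq> 0" by (auto elim: evenE)
    have "w (- i) = w (2 * (- j))" using j by simp
    also have "\<dots> = 1 - w (- j)" using j by (intro w_double) auto
    also have "w (- j) = w j" using 1 False j by auto
    finally show ?thesis using j w_double by simp
  qed
qed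

definition u :: "nat \<Rightarrow> nat" where "u n = w (int n + 1)"

lemma sigma_word_append: "sigma_word (xs @ ys) = sigma_word xs @ sigma_word ys"
  unfolding sigma_word_def by simp

lemma sigma_word_map:
  assumes "\<And>n. f n \<in> {0,1}"
  shows "sigma_word (map f [0..<m]) =
    map (\<lambda>n. if even n then 0 else 1 - f (n div 2)) [0..<2*m]"
proof (induction m)
  case 0
  then show ?case by (simp add: sigma_word_def)
next
  case (Suc m)
  have e: "[0..<2 * Suc m] = [0..<2*m] @ [2*m, 2*m+1]" by simp
  have s: "sigma (f m) = [0, 1 - f m]" using assms[of m] by (auto simp: sigma_def)
  show ?case using Suc unfolding e
    by (simp add: sigma_word_append s) (simp add: sigma_word_def s)
qed

lemma sigma_pow: "(sigma_word ^^ k) [0] = map u [0..<2^k]"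
proof (induction k)
  case 0
  then show ?case by (simp add: u_def w_odd)
next
  case (Suc k)
  have "(sigma_word ^^ Suc k) [0] = sigma_word (map u [0..<2^k])" using Suc by simp
  also have "\<dots> = map (\<lambda>n. if even n then 0 else 1 - u (n div 2)) [0..<2*2^k]"
    by (rule sigma_word_map) (unfold u_def, rule w_01)
  also have "\<dots> = map u [0..<2^Suc k]"
  proof (rule map_cong)
    fix n assume "n \<in> set [0..<2^Suc k]"
    show "(if even n then 0 else 1 - u (n div 2)) = u n"
    proof (cases "even n")
      case True
      then show ?thesis by (simp add: u_def w_odd)
    next
      case False
      then obtain q where q: "n = 2 * q + 1" by (auto elim: oddE)
      have e: "int n + 1 = 2 * (int q + 1)" using q by simp
      have "u n = 1 - u q" unfolding u_def e by (rule w_double) simp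
      then show ?thesis using q by simp
    qed
  qed simp
  finally show ?case .
qed

definition W :: "nat \<Rightarrow> int \<Rightarrow> nat" where "W b j = (if j = 0 then b else w j)"

definition P :: "int \<Rightarrow> nat \<Rightarrow> int \<Rightarrow> nat" where "P c b = (\<lambda>i. W b (i + c))"

lemma sublist_upt: "s + n \<le> M \<Longrightarrow> sublist (map f [s..<s+n]) (map f [0..<M])"
proof -
  assume a: "s + n \<le> M"
  have e1: "[0..<M] = [0..<s+n] @ [s+n..<M]" using upt_add_eq_append[of 0 "s+n" "M-(s+n)"] a by simp
  have e2: "[0..<s+n] = [0..<s] @ [s..<s+n]" using upt_add_eq_append[of 0 s n] by simp
  have "[0..<M] = [0..<s] @ [s..<s+n] @ [s+n..<M]" using e1 e2 by simp
  then show ?thesis unfolding sublist_def by (metis map_append)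
qed

lemma P_in: "b \<in> {0,1} \<Longrightarrow> P c b \<in> X_sigma"
proof -
  assume b: "b \<in> {0,1}"
  have vals: "\<forall>i. P c b i \<in> {0,1}" using b w_01 by (auto simp: P_def W_def)
  have "subword (P c b) i n \<in> lang_sigma" for i n
  proof -
    define B where "B = nat (\<bar>i\<bar> + \<bar>c\<bar>) + n + 1"
    define K where "K = 2 * B + b"
    have "B < 2 ^ B" by simp
    also have "(2::nat) ^ B \<le> 2 ^ K" unfolding K_def by (intro power_increasing) auto
    finally have BK: "int B < 2 ^ K"
      by (metis of_nat_less_iff of_nat_numeral of_nat_power)
    have Kb: "K mod 2 = b" using b unfolding K_def by auto
    have key: "W b j = w (j + 2 ^ K)" if "\<bar>j\<bar> < 2 ^ K" for j
    proof (cases "j = 0")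
      case True
      then show ?thesis using Kb w_pow[of K] by (simp add: W_def)
    next
      case False
      then show ?thesis using w_trans[OF False that] by (simp add: W_def)
    qed
    define s where "s = nat (i + c + 2 ^ K - 1)"
    have ge: "i + c + 2 ^ K \<ge> 1" using BK unfolding B_def by linarith
    have "subword (P c b) i n = map u [s..<s+n]"
      unfolding subword_def
    proof (rule nth_equalityI)
      fix t assume "t < length (map (\<lambda>j. P c b (i + int j)) [0..<n])"
      then have t: "t < n" by simp
      have jb: "\<bar>i + int t + c\<bar> < 2 ^ K" using BK t unfolding B_def by linarith
      have ee: "int s + int t + 1 = i + int t + c + 2 ^ K" using ge unfolding s_def by simp
      have "map (\<lambda>j. P c b (i + int j)) [0..<n] ! t = W b (i + int t + c)"
        using t by (simp add: P_def)
      also have "\<dots> = w (int s + int t + 1)" unfolding key[OF jb] ee ..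
      also have "\<dots> = map u [s..<s + n] ! t" using t by (simp add: u_def)
      finally show "map (\<lambda>j. P c b (i + int j)) [0..<n] ! t = map u [s..<s + n] ! t" .
    qed simp
    moreover have "s + n \<le> 2 ^ Suc K"
    proof -
      have "int s + int n \<le> 2 * 2 ^ K" using ge BK unfolding s_def B_def by linarith
      then show ?thesis
        by (metis of_nat_add of_nat_le_iff of_nat_numeral of_nat_power power_Suc)
    qed
    ultimately have "sublist (subword (P c b) i n) ((sigma_word ^^ Suc K) [0])"
      unfolding sigma_pow by (simp only: sublist_upt)
    then have "\<exists>k\<ge>1. sublist (subword (P c b) i n) ((sigma_word ^^ k) [0])"
      by (intro exI[of _ "Suc K"]) simp
    then show ?thesis unfolding lang_sigma_def by blast
  qed
  then show ?thesis using vals unfolding X_sigma_def by auto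
qed

definition z0 :: "nat \<Rightarrow> int" where "z0 = (\<lambda>n. 0)"
definition zN :: "nat \<Rightarrow> nat \<Rightarrow> int" where "zN N = (\<lambda>n. 3 ^ N mod 3 ^ n)"

lemma z0_in: "z0 \<in> Z3" unfolding Z3_def z0_def by auto

lemma zN_in: "zN N \<in> Z3"
  unfolding Z3_def zN_def
proof (intro CollectI allI conjI)
  fix n
  show "(3::int) ^ N mod 3 ^ n \<in> {0..<3 ^ n}" by simp
  have "(3::int) ^ n dvd 3 ^ Suc n" by (simp add: le_imp_power_dvd)
  then show "(3::int) ^ N mod 3 ^ n = 3 ^ N mod 3 ^ Suc n mod 3 ^ n"
    by (simp add: mod_mod_cancel)
qed

lemma zN_eq: "n \<le> N \<Longrightarrow> zN N n = z0 n"
  unfolding zN_def z0_def by (simp add: le_imp_power_dvd)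

lemma zN_ne: "zN N \<noteq> z0"
proof
  assume "zN N = z0"
  then have "zN N (Suc N) = 0" by (simp add: z0_def)
  moreover have "zN N (Suc N) = 3 ^ N" unfolding zN_def by simp
  ultimately show False by simp
qed

lemma Tmap_pow: "(Tmap ^^ k) (a, b) = ((shift ^^ k) a, (z3_plus1 ^^ k) b)"
  by (induction k) (auto simp: Tmap_def)

lemma Tinv_pow: "(Tinv ^^ k) (a, b) = ((shift_inv ^^ k) a, (z3_minus1 ^^ k) b)"
  by (induction k) (auto simp: Tinv_def)

lemma shift_inv_pow: "(shift_inv ^^ k) x = (\<lambda>i. x (i - int k))"
  by (induction k arbitrary: x) (auto simp: shift_inv_def algebra_simps)

lemma agree_plus: "\<forall>n\<le>N. a n = b n \<Longrightarrow> \<forall>n\<le>N. (z3_plus1 ^^ k) a n = (z3_plus1 ^^ k) b n"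
  by (induction k) (auto simp: z3_plus1_def)

lemma agree_minus: "\<forall>n\<le>N. a n = b n \<Longrightarrow> \<forall>n\<le>N. (z3_minus1 ^^ k) a n = (z3_minus1 ^^ k) b n"
  by (induction k) (auto simp: z3_minus1_def)

lemma dist_Z3_le: "\<forall>n\<le>N. a n = b n \<Longrightarrow> dist_Z3 a b \<le> (1/3) ^ N"
proof (cases "a = b")
  case True
  then show ?thesis by (simp add: dist_Z3_def)
next
  case False
  assume ag: "\<forall>n\<le>N. a n = b n"
  from False obtain m where "a m \<noteq> b m" by auto
  then have "a (LEAST m. a m \<noteq> b m) \<noteq> b (LEAST m. a m \<noteq> b m)" by (rule LeastI)
  then have "\<not> (LEAST m. a m \<noteq> b m) \<le> N" using ag by blast
  then have "N \<le> (LEAST m. a m \<noteq> b m) - 1" by linarith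
  then have "((1::real)/3) ^ ((LEAST m. a m \<noteq> b m) - 1) \<le> (1/3) ^ N"
    by (intro power_decreasing) auto
  then show ?thesis using False by (simp add: dist_Z3_def)
qed

lemma dist_seq_le: "\<forall>n<N. x (int n) = y (int n) \<and> x (- int n) = y (- int n) \<Longrightarrow>
  dist_seq x y \<le> (1/2) ^ N"
proof (cases "x = y")
  case True
  then show ?thesis by (simp add: dist_seq_def)
next
  case False
  assume ag: "\<forall>n<N. x (int n) = y (int n) \<and> x (- int n) = y (- int n)"
  let ?Q = "\<lambda>n::nat. x (int n) \<noteq> y (int n) \<or> x (- int n) \<noteq> y (- int n)"
  from False obtain i where "x i \<noteq> y i" by auto
  then have "?Q (nat \<bar>i\<bar>)" by (cases "i \<ge> 0") auto
  then have "?Q (LEAST n. ?Q n)" by (rule LeastI)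
  then have "\<not> (LEAST n. ?Q n) < N" using ag by blast
  then have "N \<le> (LEAST n. ?Q n)" by linarith
  then have "((1::real)/2) ^ (LEAST n. ?Q n) \<le> (1/2) ^ N"
    by (intro power_decreasing) auto
  then show ?thesis using False by (simp add: dist_seq_def)
qed

lemma dist_seq_refl: "dist_seq x x = 0" by (simp add: dist_seq_def)

lemma not_expansive: "\<not> expansive Xprod dist_prod Tpow"
proof
  assume "expansive Xprod dist_prod Tpow"
  then obtain \<delta> :: real where d: "\<delta> > 0" and
    H: "\<forall>p\<in>Xprod. \<forall>q\<in>Xprod. p \<noteq> q \<longrightarrow> (\<exists>n. dist_prod (Tpow n p) (Tpow n q) > \<delta>)"
    unfolding expansive_def by blast
  obtain N where N: "(1/3::real) ^ N < \<delta>" using real_arch_pow_inv[OF d, of "1/3"] by auto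
  define x where "x = P 0 0"
  have xin: "x \<in> X_sigma" unfolding x_def by (rule P_in) simp
  have "(x, z0) \<in> Xprod" "(x, zN N) \<in> Xprod" using xin z0_in zN_in by (auto simp: Xprod_def)
  moreover have "(x, z0) \<noteq> (x, zN N)" using zN_ne[of N] by (metis prod.inject)
  ultimately obtain n where gt: "dist_prod (Tpow n (x, z0)) (Tpow n (x, zN N)) > \<delta>"
    using H by blast
  have ag: "\<forall>m\<le>N. z0 m = zN N m" using zN_eq by simp
  have "\<forall>m\<le>N. snd (Tpow n (x, z0)) m = snd (Tpow n (x, zN N)) m"
    unfolding Tpow_def using agree_plus[OF ag] agree_minus[OF ag]
    by (auto simp: Tmap_pow Tinv_pow)
  then have "dist_Z3 (snd (Tpow n (x, z0))) (snd (Tpow n (x, zN N))) \<le> (1/3) ^ N"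
    by (rule dist_Z3_le)
  moreover have "fst (Tpow n (x, z0)) = fst (Tpow n (x, zN N))"
    unfolding Tpow_def by (auto simp: Tmap_pow Tinv_pow)
  ultimately have "dist_prod (Tpow n (x, z0)) (Tpow n (x, zN N)) \<le> (1/3) ^ N"
    unfolding dist_prod_def by (simp add: dist_seq_refl)
  then show False using gt N by linarith
qed

lemma not_equicont: "\<not> equicontinuous Xprod dist_prod Tpow"
proof
  assume "equicontinuous Xprod dist_prod Tpow"
  moreover have pin: "(P 0 0, z0) \<in> Xprod" using P_in[of 0 0] z0_in by (auto simp: Xprod_def)
  ultimately obtain \<delta> :: real where d: "\<delta> > 0" and
    H: "\<forall>q\<in>Xprod. dist_prod (P 0 0, z0) q < \<delta> \<longrightarrow>
          (\<forall>n. dist_prod (Tpow n (P 0 0, z0)) (Tpow n q) < 1)"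
    unfolding equicontinuous_def by (meson zero_less_one)
  obtain m where m: "(1/2::real) ^ m < \<delta>" using real_arch_pow_inv[OF d, of "1/2"] by auto
  define K where "K = 2 * m"
  have "m < 2 ^ m" by simp
  also have "(2::nat) ^ m \<le> 2 ^ K" unfolding K_def by (intro power_increasing) auto
  finally have mK: "m \<le> 2 ^ K" by simp
  define q where "q = P (2 ^ K) 1"
  have qin: "(q, z0) \<in> Xprod" using P_in[of 1] z0_in by (auto simp: Xprod_def q_def)
  have wK: "w (2 ^ K) = 0" using w_pow[of K] unfolding K_def by simp
  have agree: "P 0 0 j = q j" if "\<bar>j\<bar> < 2 ^ K" for j
  proof (cases "j = 0")
    case True
    then show ?thesis using wK by (simp add: P_def W_def q_def)
  next
    case False
    have "j + 2 ^ K \<noteq> 0" using that by auto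
    then show ?thesis using w_trans[OF False that] False by (simp add: P_def W_def q_def)
  qed
  have "dist_seq (P 0 0) q \<le> (1/2) ^ (2 ^ K)"
    by (rule dist_seq_le) (auto intro!: agree)
  also have "\<dots> \<le> (1/2) ^ m" using mK by (intro power_decreasing) auto
  finally have "dist_seq (P 0 0) q < \<delta>" using m by linarith
  then have "dist_prod (P 0 0, z0) (q, z0) < \<delta>"
    by (simp add: dist_prod_def dist_Z3_def d)
  then have lt: "dist_prod (Tpow (- (2 ^ K)) (P 0 0, z0)) (Tpow (- (2 ^ K)) (q, z0)) < 1"
    using H qin by blast
  let ?a = "(shift_inv ^^ (2 ^ K)) (P 0 0)"
  let ?b = "(shift_inv ^^ (2 ^ K)) q"
  have a0: "?a 0 = 0"
    using w_neg[of "2 ^ K"] wK by (simp add: shift_inv_pow P_def W_def)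
  have b0: "?b 0 = 1" by (simp add: shift_inv_pow P_def W_def q_def)
  have "?a \<noteq> ?b" using a0 b0 by auto
  moreover have "(LEAST n::nat. ?a (int n) \<noteq> ?b (int n) \<or> ?a (- int n) \<noteq> ?b (- int n)) = 0"
    using a0 b0 by (intro Least_eq_0) simp
  ultimately have "dist_seq ?a ?b = 1" by (simp add: dist_seq_def)
  moreover have "Tpow (- (2 ^ K)) (P 0 0, z0) = (?a, (z3_minus1 ^^ (2 ^ K)) z0)"
    "Tpow (- (2 ^ K)) (q, z0) = (?b, (z3_minus1 ^^ (2 ^ K)) z0)"
    unfolding Tpow_def by (auto simp: Tinv_pow nat_power_eq)
  ultimately show False using lt by (simp add: dist_prod_def)
qed

theorem mainTheorem12:
  shows "\<not> expansive Xprod dist_prod Tpow \<and> \<not> equicontinuous Xprod dist_prod Tpow"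
  using not_expansive not_equicont by blast

end
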